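(* Fix an integer $r\ge1$, let $\mathrm{J}=e^{2\pi\mathrm{I}/r}$ with $\mathrm{I}^2=-1$, and consider the curve $x=-y^r+\log y$, i.e. $e^x=ye^{-y^r}$, near $y=0$. For $i\in\{0,\dots,r-1\}$ define $$\xi_i=\frac{\mathrm{I}\sqrt2\,r^{-\frac12-\frac1r}\mathrm{J}^i}{r^{-1/r}\mathrm{J}^i-y},$$ and for $a\in\{0,\dots,r-1\}$ define $\tilde\xi_a=\sum_{i=0}^{r-1}r^{-1}\mathrm{J}^{-(a+1)i}\xi_i$. Then, as functions of $x$ expanded near $y=0$, $$\tilde\xi_a=\mathrm{I}\sqrt2\,r^{\frac12-\frac{a+1}r}\sum_{n=0}^\infty\frac{(rn+r-a-1)^n}{n!}e^{(rn+r-a-1)x}.$$ *)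

theory Defs
  imports "HOL-Analysis.Analysis"
begin

definition J :: "nat \<Rightarrow> complex" where
  "J r = exp (2 * of_real pi * \<i> / of_nat r)"

definition xi :: "nat \<Rightarrow> nat \<Rightarrow> complex \<Rightarrow> complex" where
  "xi r i y = \<i> * of_real (sqrt 2) * of_real (real r powr (-1/2 - 1/real r)) * J r ^ i
      / (of_real (real r powr (-1/real r)) * J r ^ i - y)"

definition xit :: "nat \<Rightarrow> nat \<Rightarrow> complex \<Rightarrow> complex" where
  "xit r a y = (\<Sum>i<r. (1 / of_nat r) * J r powi (- (int (a+1) * int i)) * xi r i y)"

end

theory Submission
  imports Defs
begin


lemma altsum_pow:
  assumes "j \<le> N"
  shows "(\<Sum>n\<le>N. of_nat (N choose n) * (-1)^n * of_nat n ^ j :: complex)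
         = (if j = N then (-1)^N * fact N else 0)"
  using assms
proof (induction N arbitrary: j)
  case 0
  then show ?case by simp
next
  case (Suc N)
  show ?case
  proof (cases j)
    case 0
    then show ?thesis
      using choose_alternating_sum[of "Suc N", where 'a=complex]
      by (simp add: mult.commute)
  next
    case (Suc i)
    have iN: "i \<le> N" using Suc.prems Suc by simp
    have "(\<Sum>n\<le>Suc N. of_nat (Suc N choose n) * (-1)^n * of_nat n ^ j :: complex)
        = (\<Sum>k\<le>N. of_nat (Suc N choose Suc k) * (-1)^(Suc k) * of_nat (Suc k) ^ j)"
      by (subst sum.atMost_Suc_shift) (simp add: Suc)
    also have "\<dots> = (\<Sum>k\<le>N. - of_nat (Suc N) * (of_nat (N choose k) * (-1)^k * of_nat (Suc k) ^ i))"
    proof (rule sum.cong[OF refl])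
      fix k assume "k \<in> {..N}"
      have e: "of_nat (Suc k) * (of_nat (Suc N choose Suc k) :: complex) = of_nat (Suc N) * of_nat (N choose k)"
        using binomial_absorption[of k "Suc N"] by (metis diff_Suc_1 of_nat_mult)
      have "of_nat (Suc N choose Suc k) * (-1)^(Suc k) * of_nat (Suc k) ^ j
          = - ((of_nat (Suc k) * (of_nat (Suc N choose Suc k) :: complex)) * (-1)^k * of_nat (Suc k) ^ i)"
        by (simp add: Suc algebra_simps)
      also have "\<dots> = - of_nat (Suc N) * (of_nat (N choose k) * (-1)^k * of_nat (Suc k) ^ i)"
        by (simp only: e) (simp add: algebra_simps)
      finally show "of_nat (Suc N choose Suc k) * (-1)^(Suc k) * of_nat (Suc k) ^ j
          = - of_nat (Suc N) * (of_nat (N choose k) * (-1)^k * of_nat (Suc k) ^ i :: complex)" .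
    qed
    also have "\<dots> = - of_nat (Suc N) * (\<Sum>k\<le>N. of_nat (N choose k) * (-1)^k * of_nat (Suc k) ^ i)"
      by (simp add: sum_distrib_left)
    also have "(\<Sum>k\<le>N. of_nat (N choose k) * (-1)^k * of_nat (Suc k) ^ i :: complex)
        = (\<Sum>k\<le>N. \<Sum>l\<le>i. of_nat (i choose l) * (of_nat (N choose k) * (-1)^k * of_nat k ^ l))"
    proof (rule sum.cong[OF refl])
      fix k
      have "(of_nat (Suc k) :: complex) ^ i = (of_nat k + 1) ^ i" by (simp add: add.commute)
      also have "\<dots> = (\<Sum>l\<le>i. of_nat (i choose l) * of_nat k ^ l * 1 ^ (i - l))"
        by (rule binomial_ring)
      finally show "of_nat (N choose k) * (-1)^k * (of_nat (Suc k) :: complex) ^ i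
          = (\<Sum>l\<le>i. of_nat (i choose l) * (of_nat (N choose k) * (-1)^k * of_nat k ^ l))"
        by (simp add: sum_distrib_left algebra_simps)
    qed
    also have "\<dots> = (\<Sum>l\<le>i. of_nat (i choose l) * (\<Sum>k\<le>N. of_nat (N choose k) * (-1)^k * of_nat k ^ l))"
      by (subst sum.swap) (simp add: sum_distrib_left)
    also have "\<dots> = (\<Sum>l\<le>i. (if l = N then of_nat (i choose l) * ((-1)^N * fact N) else 0))"
      by (rule sum.cong[OF refl]) (use iN Suc.IH in auto)
    also have "\<dots> = (if i = N then (-1)^N * fact N else 0)"
      using iN by (auto simp: sum.delta)
    finally show ?thesis using Suc iN by (auto simp: algebra_simps)
  qed
qed

lemma altsum_lin:
  fixes \<alpha> \<beta> :: complex
  shows "(\<Sum>n\<le>N. of_nat (N choose n) * (-1)^n * (\<alpha> * of_nat n + \<beta>) ^ N)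
         = (-1)^N * fact N * \<alpha>^N"
proof -
  have "(\<Sum>n\<le>N. of_nat (N choose n) * (-1)^n * (\<alpha> * of_nat n + \<beta>) ^ N)
     = (\<Sum>n\<le>N. \<Sum>j\<le>N. (of_nat (N choose j) * \<alpha>^j * \<beta>^(N-j)) * (of_nat (N choose n) * (-1)^n * of_nat n ^ j))"
  proof (rule sum.cong[OF refl])
    fix n
    have "(\<alpha> * of_nat n + \<beta>) ^ N = (\<Sum>j\<le>N. of_nat (N choose j) * (\<alpha> * of_nat n)^j * \<beta>^(N-j))"
      by (rule binomial_ring)
    thus "of_nat (N choose n) * (-1)^n * (\<alpha> * of_nat n + \<beta>) ^ N = (\<Sum>j\<le>N. (of_nat (N choose j) * \<alpha>^j * \<beta>^(N-j)) * (of_nat (N choose n) * (-1)^n * of_nat n ^ j))"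
      by (simp add: sum_distrib_left power_mult_distrib algebra_simps)
  qed
  also have "\<dots> = (\<Sum>j\<le>N. (of_nat (N choose j) * \<alpha>^j * \<beta>^(N-j)) * (\<Sum>n\<le>N. of_nat (N choose n) * (-1)^n * of_nat n ^ j))"
    by (subst sum.swap) (simp add: sum_distrib_left)
  also have "\<dots> = (\<Sum>j\<le>N. if j = N then (of_nat (N choose j) * \<alpha>^j * \<beta>^(N-j)) * ((-1)^N * fact N) else 0)"
    by (rule sum.cong[OF refl]) (simp add: altsum_pow)
  also have "\<dots> = (-1)^N * fact N * \<alpha>^N"
    by (simp add: sum.delta)
  finally show ?thesis .
qed

lemma diag_sum:
  fixes \<alpha> \<beta> v :: complex
  shows "(\<Sum>n\<le>N. (\<alpha> * of_nat n + \<beta>) ^ n / fact n * v ^ n *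
            ((- ((\<alpha> * of_nat n + \<beta>) * v)) ^ (N - n) / fact (N - n))) = (\<alpha> * v) ^ N"
proof -
  have "(\<Sum>n\<le>N. (\<alpha> * of_nat n + \<beta>) ^ n / fact n * v ^ n *
            ((- ((\<alpha> * of_nat n + \<beta>) * v)) ^ (N - n) / fact (N - n)))
      = (\<Sum>n\<le>N. ((-1)^N * v^N / fact N) * (of_nat (N choose n) * (-1)^n * (\<alpha> * of_nat n + \<beta>) ^ N))"
  proof (rule sum.cong[OF refl])
    fix n assume "n \<in> {..N}"
    hence nN: "n \<le> N" by simp
    have s: "(-1::complex)^(N-n) = (-1)^N * (-1)^n"
    proof -
      have "(-1::complex)^N = (-1)^(N-n) * (-1)^n" using nN by (simp add: power_add[symmetric])
      hence "(-1::complex)^N * (-1)^n = (-1)^(N-n) * ((-1)^n * (-1)^n)" by simp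
      also have "(-1::complex)^n * (-1)^n = 1" by (simp add: power_add[symmetric] flip: power2_eq_square power_mult)
      finally show ?thesis by simp
    qed
    have g: "(\<alpha> * of_nat n + \<beta>) ^ n * (\<alpha> * of_nat n + \<beta>) ^ (N - n) = (\<alpha> * of_nat n + \<beta>) ^ N"
      using nN by (simp add: power_add[symmetric])
    have vv: "v ^ n * v ^ (N - n) = v ^ N"
      using nN by (simp add: power_add[symmetric])
    have b: "(of_nat (N choose n) :: complex) = fact N / (fact n * fact (N - n))"
      using binomial_fact[OF nN] by simp
    show "(\<alpha> * of_nat n + \<beta>) ^ n / fact n * v ^ n *
            ((- ((\<alpha> * of_nat n + \<beta>) * v)) ^ (N - n) / fact (N - n))
        = ((-1)^N * v^N / fact N) * (of_nat (N choose n) * (-1)^n * (\<alpha> * of_nat n + \<beta>) ^ N)"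
      unfolding b
      by (simp add: power_minus' power_mult_distrib s flip: g vv)
  qed
  also have "\<dots> = ((-1)^N * v^N / fact N) * ((-1)^N * fact N * \<alpha>^N)"
    by (subst sum_distrib_left[symmetric]) (simp only: altsum_lin)
  also have "\<dots> = (\<alpha> * v) ^ N"
    by (simp add: power_mult_distrib flip: power_mult power_add mult.assoc)
  finally show ?thesis .
qed




lemma pow_fact_le_exp:
  fixes x :: real
  assumes "x \<ge> 0"
  shows "x ^ n / fact n \<le> exp x"
proof -
  have sm: "(\<lambda>k. x ^ k / fact k) sums exp x"
    using exp_converges[of x] by (simp add: divide_inverse mult.commute)
  have "sum (\<lambda>k. x ^ k / fact k) {n} \<le> suminf (\<lambda>k. x ^ k / fact k)"
    by (rule sum_le_suminf) (use sm assms in \<open>auto simp: sums_iff\<close>)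
  thus ?thesis using sm by (simp add: sums_iff)
qed

lemma core:
  fixes v :: complex and r m :: nat
  assumes r1: "r \<ge> 1" and vs: "norm v * exp (2 * real r) * real r < 1" and v1: "norm v < 1"
  shows "(\<lambda>n. (of_nat r * of_nat n + of_nat m) ^ n / fact n * v ^ n
            * exp (- ((of_nat r * of_nat n + of_nat m) * v))) sums (1 / (1 - of_nat r * v))"
proof -
  define \<alpha> :: complex where "\<alpha> = of_nat r"
  define \<beta> :: complex where "\<beta> = of_nat m"
  define f where "f = (\<lambda>(n,k). (\<alpha> * of_nat n + \<beta>) ^ n / fact n * v ^ n *
            ((- ((\<alpha> * of_nat n + \<beta>) * v)) ^ k / fact k))"
  define s where "s = norm v"
  define gr where "gr = (\<lambda>n::nat. real r * real n + real m)"
  have s0: "s \<ge> 0" by (simp add: s_def)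
  have gr0: "gr n \<ge> 0" for n by (simp add: gr_def)
  have ng: "norm (\<alpha> * of_nat n + \<beta>) = gr n" for n
  proof -
    have "\<alpha> * of_nat n + \<beta> = of_real (gr n)" by (simp add: \<alpha>_def \<beta>_def gr_def)
    thus ?thesis using gr0[of n] by simp
  qed
  have nf: "norm (f (n,k)) = gr n ^ n / fact n * s ^ n * ((gr n * s) ^ k / fact k)" for n k
    by (simp add: f_def norm_mult norm_divide norm_power ng s_def)
  define G where "G = (\<lambda>n. gr n ^ n / fact n * s ^ n * exp (gr n * s))"
  have rowr: "(\<lambda>k. norm (f (n,k))) sums G n" for n
  proof -
    have "(\<lambda>k. (gr n * s) ^ k / fact k) sums exp (gr n * s)"
      using exp_converges[of "gr n * s"] by (simp add: divide_inverse mult.commute)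
    thus ?thesis unfolding nf G_def by (rule sums_mult)
  qed
  have rowr': "((\<lambda>k. norm (f (n,k))) has_sum G n) UNIV" for n
    by (rule sums_nonneg_imp_has_sum[OF rowr]) simp
  have Gbound: "norm (G n) \<le> exp (real m * (1 + s)) * (exp (real r * (1 + s)) * s) ^ n" for n
  proof -
    have "G n \<ge> 0" using gr0 s0 by (simp add: G_def)
    hence "norm (G n) = G n" by simp
    also have "G n \<le> exp (gr n) * s ^ n * exp (gr n * s)"
      unfolding G_def using pow_fact_le_exp[OF gr0[of n], of n] s0
      by (intro mult_right_mono) auto
    also have "\<dots> = exp (gr n * (1 + s)) * s ^ n"
      by (simp add: exp_add[symmetric] algebra_simps)
    also have "gr n * (1 + s) = real m * (1 + s) + real n * (real r * (1 + s))"
      by (simp add: gr_def algebra_simps)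
    also have "exp (real m * (1 + s) + real n * (real r * (1 + s))) * s ^ n
        = exp (real m * (1 + s)) * (exp (real r * (1 + s)) * s) ^ n"
      by (simp add: exp_add exp_of_nat_mult power_mult_distrib)
    finally show ?thesis .
  qed
  have q1: "norm (exp (real r * (1 + s)) * s) < 1"
  proof -
    have "real r * (1 + s) \<le> real r * 2"
      using v1 by (intro mult_left_mono) (auto simp: s_def)
    hence "exp (real r * (1 + s)) \<le> exp (2 * real r)"
      by (simp add: mult.commute)
    hence "exp (real r * (1 + s)) * s \<le> exp (2 * real r) * s"
      using s0 by (rule mult_right_mono)
    also have "exp (2 * real r) * s \<le> exp (2 * real r) * s * real r"
      using mult_left_mono[of 1 "real r" "exp (2 * real r) * s"] r1 s0 by simp
    also have "\<dots> < 1" using vs by (simp add: s_def mult_ac)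
    finally show ?thesis using s0 by simp
  qed
  have Gsum: "summable G"
    apply (rule summable_comparison_test'[where N=0, OF _ Gbound])
    apply (rule summable_mult)
    apply (rule summable_geometric[OF q1])
    done
  have Gsum': "G summable_on UNIV"
    using Gsum by (subst summable_on_UNIV_nonneg_real_iff) (auto simp: G_def gr0 s0)
  have fabs: "(\<lambda>x. norm (f x)) summable_on Sigma UNIV (\<lambda>_. UNIV)"
    by (rule summable_on_SigmaI[OF rowr' Gsum']) simp
  have fabs': "(\<lambda>x. norm (f x)) summable_on UNIV"
    using fabs by (simp only: UNIV_Times_UNIV[symmetric])
  have "f summable_on UNIV"
    by (rule abs_summable_summable[OF fabs'])
  then obtain S where fS: "(f has_sum S) UNIV"
    by (auto simp: summable_on_def)
  define row where "row = (\<lambda>n. (\<alpha> * of_nat n + \<beta>) ^ n / fact n * v ^ n * exp (- ((\<alpha> * of_nat n + \<beta>) * v)))"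
  have rowc: "((\<lambda>k. f (n,k)) has_sum row n) UNIV" for n
  proof (rule norm_summable_imp_has_sum)
    show "summable (\<lambda>k. norm (f (n, k)))" using rowr[of n] by (simp add: sums_iff)
    have "(\<lambda>k. (- ((\<alpha> * of_nat n + \<beta>) * v)) ^ k / fact k) sums exp (- ((\<alpha> * of_nat n + \<beta>) * v))"
      using exp_converges[of "- ((\<alpha> * of_nat n + \<beta>) * v)"] by (simp add: scaleR_conv_of_real divide_inverse mult.commute)
    thus "(\<lambda>k. f (n, k)) sums row n"
      unfolding f_def row_def prod.case by (rule sums_mult)
  qed
  have rows: "row sums S"
    apply (rule has_sum_imp_sums)
    apply (rule has_sum_SigmaD[where B="\<lambda>_. UNIV"])
    using fS rowc by auto
  define h where "h = (\<lambda>(N,n). f (n, N - n))"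
  have hS: "(h has_sum S) (Sigma UNIV (\<lambda>N. {..N}))"
  proof -
    have "(f has_sum S) UNIV = (h has_sum S) (Sigma UNIV (\<lambda>N. {..N}))"
      by (rule has_sum_reindex_bij_witness[where i="\<lambda>(N,n). (n, N - n)" and j="\<lambda>(n,k). (n+k, n)"])
         (auto simp: h_def)
    thus ?thesis using fS by simp
  qed
  have diag: "((\<lambda>N. (\<alpha> * v) ^ N) has_sum S) UNIV"
  proof (rule has_sum_SigmaD[OF hS])
    fix N :: nat
    have "((\<lambda>n. h (N, n)) has_sum (\<Sum>n\<le>N. h (N, n))) {..N}"
      by (rule has_sum_finite) simp
    also have "(\<Sum>n\<le>N. h (N, n)) = (\<alpha> * v) ^ N"
      unfolding h_def f_def prod.case by (rule diag_sum)
    finally show "((\<lambda>n. h (N, n)) has_sum (\<alpha> * v) ^ N) {..N}" .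
  qed
  have "norm (\<alpha> * v) < 1"
  proof -
    have "norm (\<alpha> * v) = real r * norm v" by (simp add: \<alpha>_def norm_mult)
    also have "\<dots> \<le> real r * (norm v * exp (2 * real r))"
      using mult_left_mono[of 1 "exp (2 * real r)" "norm v"]
      by (intro mult_left_mono) auto
    also have "\<dots> = norm v * exp (2 * real r) * real r" by (simp add: mult_ac)
    finally show ?thesis using vs by simp
  qed
  hence "(\<lambda>N. (\<alpha> * v) ^ N) sums (1 / (1 - \<alpha> * v))" by (rule geometric_sums)
  with has_sum_imp_sums[OF diag] have "S = 1 / (1 - \<alpha> * v)" by (simp add: sums_unique2)
  with rows show ?thesis by (simp add: row_def \<alpha>_def \<beta>_def)
qed




lemma J_nz: "J r \<noteq> 0" by (simp add: J_def)

lemma J_pow: "J r ^ s = exp (of_nat s * (2 * of_real pi * \<i> / of_nat r))"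
  unfolding J_def by (rule exp_of_nat_mult[symmetric])

lemma J_pow_r: assumes "r \<ge> 1" shows "J r ^ r = 1"
  using assms by (simp add: J_pow)

lemma J_pow_ne1:
  assumes "r \<ge> 1" "0 < s" "s < 2 * r" "s \<noteq> r"
  shows "J r ^ s \<noteq> 1"
proof
  assume "J r ^ s = 1"
  hence "exp (of_nat s * (2 * of_real pi * \<i> / of_nat r)) = 1" by (simp add: J_pow)
  then obtain n :: int where n: "Im (of_nat s * (2 * of_real pi * \<i> / of_nat r)) = of_int (2 * n) * pi"
    unfolding exp_eq_1 by blast
  have "Im (of_nat s * (2 * of_real pi * \<i> / of_nat r)) = real s * 2 * pi / real r"
    by (simp add: Im_divide_of_nat)
  with n have "real s * 2 * pi / real r = 2 * real_of_int n * pi" by simp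
  hence "real s = real_of_int n * real r" using assms(1) by (simp add: field_simps)
  hence e: "int s = n * int r" by (metis of_int_eq_iff of_int_mult of_int_of_nat_eq)
  have "0 < n * int r" "n * int r < 2 * int r" using e assms by linarith+
  hence "0 < n" "n < 2" using assms(1) by (auto simp: zero_less_mult_iff mult_less_cancel_right)
  hence "n = 1" by simp
  with e assms(4) show False by simp
qed

lemma J_rootsum:
  assumes "r \<ge> 1" "0 < s" "s < 2 * r"
  shows "(\<Sum>i<r. inverse (J r ^ s) ^ i) = (if s = r then of_nat r else 0)"
proof (cases "s = r")
  case True
  then show ?thesis using J_pow_r[OF assms(1)] by simp
next
  case False
  define q where "q = inverse (J r ^ s)"
  have q1: "q \<noteq> 1" using J_pow_ne1[OF assms False] by (simp add: q_def)
  have qr: "q ^ r = 1"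
    using J_pow_r[OF assms(1)] by (simp add: q_def power_inverse flip: power_mult) (simp add: mult.commute power_mult)
  have "(\<Sum>i<r. q ^ i) = (q ^ r - 1) / (q - 1)" using q1 by (rule geometric_sum)
  with qr False show ?thesis by (simp add: q_def)
qed




lemma xi_expand:
  fixes \<zeta> \<rho> y :: complex
  assumes z: "\<zeta> ^ r = 1" "norm \<zeta> = 1" and rho: "\<rho> \<noteq> 0" and yr: "norm y < norm \<rho>"
    and tr: "(y / \<rho>) ^ r \<noteq> 1"
  shows "\<zeta> / (\<rho> * \<zeta> - y) = (\<Sum>k<r. (y / \<rho>) ^ k * inverse \<zeta> ^ k) / (\<rho> * (1 - (y / \<rho>) ^ r))"
proof -
  define t where "t = y / \<rho>"
  define q where "q = t * inverse \<zeta>"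
  have z0: "\<zeta> \<noteq> 0" using z by auto
  have nt: "norm t < 1" using yr rho by (simp add: t_def norm_divide divide_less_eq)
  have q1: "q \<noteq> 1"
  proof
    assume "q = 1"
    hence "norm q = 1" by simp
    moreover have "norm q = norm t" using z by (simp add: q_def norm_mult norm_inverse)
    ultimately show False using nt by simp
  qed
  have qr: "q ^ r = t ^ r" using z by (simp add: q_def power_mult_distrib power_inverse)
  have "(\<Sum>k<r. t ^ k * inverse \<zeta> ^ k) = (\<Sum>k<r. q ^ k)"
    by (simp add: q_def power_mult_distrib)
  also have "\<dots> = (q ^ r - 1) / (q - 1)" using q1 by (rule geometric_sum)
  also have "\<dots> = (1 - t ^ r) / (1 - q)"
    using q1 by (simp add: qr field_simps)
  finally have S: "(\<Sum>k<r. t ^ k * inverse \<zeta> ^ k) = (1 - t ^ r) / (1 - q)" .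
  have tr': "1 - t ^ r \<noteq> 0" using tr by (simp add: t_def)
  have q1': "1 - q \<noteq> 0" using q1 by simp
  have "\<rho> * \<zeta> - y \<noteq> 0"
  proof
    assume "\<rho> * \<zeta> - y = 0"
    hence "y = \<rho> * \<zeta>" by simp
    hence "norm y = norm \<rho>" using z by (simp add: norm_mult)
    with yr show False by simp
  qed
  note nz = this
  have "(1 - t ^ r) / (1 - q) / (\<rho> * (1 - t ^ r)) = 1 / (\<rho> * (1 - q))"
  proof -
    have "(1 - t ^ r) / (1 - q) / (\<rho> * (1 - t ^ r)) = ((1 - t ^ r) / (1 - t ^ r)) / (\<rho> * (1 - q))"
      by (simp add: divide_divide_eq_left mult_ac)
    thus ?thesis using tr' by simp
  qed
  also have "\<rho> * (1 - q) = (\<rho> * \<zeta> - y) / \<zeta>"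
    using z0 rho by (simp add: q_def t_def field_simps)
  also have "1 / ((\<rho> * \<zeta> - y) / \<zeta>) = \<zeta> / (\<rho> * \<zeta> - y)" by simp
  finally show ?thesis
    unfolding t_def[symmetric] S by simp
qed




lemma norm_J: "norm (J r) = 1"
  by (simp add: J_def norm_exp_eq_Re)

lemma xit_closed:
  fixes y :: complex
  assumes r1: "r \<ge> 1" and ar: "a < r"
    and yr: "norm y < r powr (-1 / real r)"
    and tr: "(y / of_real (r powr (-1 / real r))) ^ r \<noteq> 1"
  shows "xit r a y = \<i> * of_real (sqrt 2) * of_real (real r powr (-1/2 - 1/real r))
            / of_real (r powr (-1 / real r)) * (y / of_real (r powr (-1 / real r))) ^ (r - a - 1)
            / (1 - (y / of_real (r powr (-1 / real r))) ^ r)"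
proof -
  define K :: complex where "K = \<i> * of_real (sqrt 2) * of_real (real r powr (-1/2 - 1/real r))"
  define \<rho> :: complex where "\<rho> = of_real (r powr (-1 / real r))"
  define t where "t = y / \<rho>"
  define m where "m = r - a - 1"
  have rho0: "\<rho> \<noteq> 0" using r1 by (simp add: \<rho>_def)
  have nrho: "norm \<rho> = r powr (-1 / real r)" by (simp add: \<rho>_def)
  have Jnz: "J r \<noteq> 0" by (rule J_nz)
  have step1: "(1 / of_nat r) * J r powi (- (int (a+1) * int i)) * xi r i y
      = K / (of_nat r * (\<rho> * (1 - t ^ r))) * (\<Sum>k<r. t ^ k * inverse (J r ^ (a + 1 + k)) ^ i)" for i
  proof -
    have z1: "(J r ^ i) ^ r = 1" proof -
      have "(J r ^ i) ^ r = (J r ^ r) ^ i" by (simp flip: power_mult add: mult.commute)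
      thus ?thesis using J_pow_r[OF r1] by simp
    qed
    have z2: "norm (J r ^ i) = 1" by (simp add: norm_power norm_J)
    have xe: "xi r i y = K * ((\<Sum>k<r. t ^ k * inverse (J r ^ i) ^ k) / (\<rho> * (1 - t ^ r)))"
    proof -
      have e: "J r ^ i / (\<rho> * J r ^ i - y) = (\<Sum>k<r. t ^ k * inverse (J r ^ i) ^ k) / (\<rho> * (1 - t ^ r))"
        unfolding t_def using xi_expand[OF z1 z2 rho0, of y] yr tr nrho by (simp add: \<rho>_def)
      have "xi r i y = K * (J r ^ i / (\<rho> * J r ^ i - y))"
        unfolding xi_def K_def \<rho>_def by simp
      thus ?thesis unfolding e .
    qed
    have pw: "J r powi (- (int (a+1) * int i)) = inverse (J r ^ ((a+1) * i))"
    proof -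
      have "- (int (a+1) * int i) = - int ((a+1)*i)" by (simp add: algebra_simps)
      hence "J r powi (- (int (a+1) * int i)) = J r powi (- int ((a+1)*i))" by (simp only:)
      also have "\<dots> = inverse (J r powi int ((a+1)*i))" by (rule power_int_minus)
      also have "\<dots> = inverse (J r ^ ((a+1)*i))" by (simp only: power_int_of_nat)
      finally show ?thesis .
    qed
    have inner: "inverse (J r ^ ((a+1) * i)) * (t ^ k * inverse (J r ^ i) ^ k)
        = t ^ k * inverse (J r ^ (a + 1 + k)) ^ i" for k
    proof -
      have "J r ^ ((a+1) * i) * (J r ^ i) ^ k = (J r ^ (a + 1 + k)) ^ i"
        by (simp add: power_add[symmetric] power_mult[symmetric] algebra_simps)
      hence "inverse (J r ^ ((a+1) * i)) * inverse (J r ^ i) ^ k = inverse (J r ^ (a + 1 + k)) ^ i"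
        by (metis inverse_mult_distrib power_inverse)
      thus ?thesis by (simp only: mult_ac)
    qed
    have sumeq: "(\<Sum>k<r. t ^ k * inverse (J r ^ (a + 1 + k)) ^ i) = inverse (J r ^ ((a+1)*i)) * (\<Sum>k<r. t ^ k * inverse (J r ^ i) ^ k)"
      by (simp only: sum_distrib_left inner)
    show ?thesis
      unfolding xe pw sumeq
      by (simp only: divide_inverse inverse_mult_distrib mult_ac mult_1_left mult_1_right)
  qed
  have "xit r a y = (\<Sum>i<r. K / (of_nat r * (\<rho> * (1 - t ^ r))) * (\<Sum>k<r. t ^ k * inverse (J r ^ (a + 1 + k)) ^ i))"
    unfolding xit_def using step1 by simp
  also have "\<dots> = K / (of_nat r * (\<rho> * (1 - t ^ r))) * (\<Sum>i<r. \<Sum>k<r. t ^ k * inverse (J r ^ (a + 1 + k)) ^ i)"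
    by (simp only: sum_distrib_left)
  also have "(\<Sum>i<r. \<Sum>k<r. t ^ k * inverse (J r ^ (a + 1 + k)) ^ i) = (\<Sum>k<r. \<Sum>i<r. t ^ k * inverse (J r ^ (a + 1 + k)) ^ i)"
    by (rule sum.swap)
  also have "\<dots> = (\<Sum>k<r. t ^ k * (\<Sum>i<r. inverse (J r ^ (a + 1 + k)) ^ i))"
    by (simp only: sum_distrib_left)
  also have "(\<Sum>k<r. t ^ k * (\<Sum>i<r. inverse (J r ^ (a + 1 + k)) ^ i))
      = (\<Sum>k<r. if k = m then t ^ k * of_nat r else 0)"
  proof (rule sum.cong[OF refl])
    fix k assume "k \<in> {..<r}"
    hence "k < r" by simp
    hence "(\<Sum>i<r. inverse (J r ^ (a + 1 + k)) ^ i) = (if a + 1 + k = r then of_nat r else 0)"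
      using ar r1 by (intro J_rootsum) auto
    moreover have "(a + 1 + k = r) = (k = m)" using ar by (auto simp: m_def)
    ultimately show "t ^ k * (\<Sum>i<r. inverse (J r ^ (a + 1 + k)) ^ i) = (if k = m then t ^ k * of_nat r else 0)"
      by simp
  qed
  also have "\<dots> = t ^ m * of_nat r" using ar by (simp add: m_def)
  finally have "xit r a y = K / (of_nat r * (\<rho> * (1 - t ^ r))) * (t ^ m * of_nat r)" .
  also have "\<dots> = K / \<rho> * t ^ m / (1 - t ^ r)"
  proof -
    have "1 - t ^ r \<noteq> 0" using tr by (simp add: t_def \<rho>_def)
    moreover have "(of_nat r :: complex) \<noteq> 0" using r1 by simp
    ultimately show ?thesis using rho0 by (simp add: field_simps)
  qed
  finally show ?thesis by (simp add: K_def \<rho>_def t_def m_def)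
qed




lemma powr_exp_identity:
  fixes r a :: nat
  assumes r1: "r \<ge> 1" and ar: "a < r"
  shows "real r powr (1/2 - real (a+1) / real r) * (real r powr (-1 / real r)) ^ (r - a - 1 + 1)
       = real r powr (-1/2 - 1/real r)"
proof -
  have rp: "real r > 0" using r1 by simp
  have "(real r powr (-1 / real r)) ^ (r - a - 1 + 1) = real r powr (-1 / real r * real (r - a - 1 + 1))"
  proof -
    have "(real r powr (-1 / real r)) ^ (r - a - 1 + 1) = (real r powr (-1 / real r)) powr real (r - a - 1 + 1)"
      by (rule powr_realpow[symmetric]) (use rp in simp)
    thus ?thesis by (simp only: powr_powr)
  qed
  also have "real (r - a - 1 + 1) = real r - real a" using ar by (simp add: of_nat_diff)
  finally have e: "(real r powr (-1 / real r)) ^ (r - a - 1 + 1) = real r powr (-1 / real r * (real r - real a))" .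
  have ex: "1/2 - real (a+1) / real r + (-1 / real r * (real r - real a)) = -1/2 - 1/real r"
    using rp by (simp add: field_simps)
  show ?thesis by (simp only: e powr_add[symmetric] ex)
qed

theorem lemma4p5:
  fixes r a :: nat
  assumes "r \<ge> 1" and "a < r"
  shows "\<forall>\<^sub>F y in at (0::complex).
     (\<lambda>n. \<i> * of_real (sqrt 2) * of_real (real r powr (1/2 - real (a+1) / real r))
          * (of_nat (r*n + r - a - 1)) ^ n / fact n
          * exp (of_nat (r*n + r - a - 1) * (- (y ^ r) + Ln y)))
     sums xit r a y"
proof -
  note r1 = assms(1) and ar = assms(2)
  define m where "m = r - a - 1"
  define \<rho>r where "\<rho>r = real r powr (-1 / real r)"
  define \<delta> where "\<delta> = 1 / (2 * real r * exp (2 * real r))"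
  define \<epsilon> where "\<epsilon> = min \<rho>r \<delta>"
  define Bc :: complex where "Bc = \<i> * of_real (sqrt 2) * of_real (real r powr (1/2 - real (a+1) / real r))"
  define K :: complex where "K = \<i> * of_real (sqrt 2) * of_real (real r powr (-1/2 - 1/real r))"
  have rp: "real r > 0" using r1 by simp
  have \<rho>0: "\<rho>r > 0" using rp by (simp add: \<rho>r_def)
  have d0: "\<delta> > 0" using rp by (simp add: \<delta>_def)
  have d1: "\<delta> \<le> 1/2"
  proof -
    have "1 * 1 \<le> real r * exp (2 * real r)" using r1 by (intro mult_mono) auto
    thus ?thesis unfolding \<delta>_def by (simp add: field_simps)
  qed
  have e0: "\<epsilon> > 0" using \<rho>0 d0 by (simp add: \<epsilon>_def)
  have rho_pow: "(complex_of_real \<rho>r) ^ r = 1 / of_nat r"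
  proof -
    have "\<rho>r ^ r = real r powr (-1 / real r * real r)"
      using rp by (simp add: \<rho>r_def powr_realpow[symmetric] powr_powr)
    also have "\<dots> = 1 / real r" using rp by (simp add: powr_minus_divide)
    finally show ?thesis by (metis of_real_divide of_real_of_nat_eq of_real_power of_real_1)
  qed
  have main: "(\<lambda>n. Bc * (of_nat (r*n + r - a - 1)) ^ n / fact n
          * exp (of_nat (r*n + r - a - 1) * (- (y ^ r) + Ln y))) sums xit r a y"
    if y0: "y \<noteq> 0" and ye: "norm y < \<epsilon>" for y :: complex
  proof -
    define v where "v = y ^ r"
    have ny1: "norm y < 1" using ye d1 by (simp add: \<epsilon>_def)
    have nv: "norm v \<le> norm y"
      unfolding v_def norm_power using power_decreasing[of 1 r "norm y"] r1 ny1 by simp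
    have nvd: "norm v < \<delta>" using nv ye by (simp add: \<epsilon>_def)
    have c1: "norm v * exp (2 * real r) * real r < 1"
    proof -
      have "norm v * exp (2 * real r) * real r < \<delta> * exp (2 * real r) * real r"
        using nvd rp by simp
      also have "\<dots> = 1/2" using rp by (simp add: \<delta>_def)
      finally show ?thesis by simp
    qed
    have c2: "norm v < 1" using nvd d1 by simp
    have core': "(\<lambda>n. (of_nat r * of_nat n + of_nat m) ^ n / fact n * v ^ n
            * exp (- ((of_nat r * of_nat n + of_nat m) * v))) sums (1 / (1 - of_nat r * v))"
      by (rule core[OF r1 c1 c2])
    have tm: "Bc * (of_nat (r*n + r - a - 1)) ^ n / fact n * exp (of_nat (r*n + r - a - 1) * (- (y ^ r) + Ln y))
        = (Bc * y ^ m) * ((of_nat r * of_nat n + of_nat m) ^ n / fact n * v ^ n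
            * exp (- ((of_nat r * of_nat n + of_nat m) * v)))" for n
    proof -
      have N: "r*n + r - a - 1 = r*n + m" using ar by (simp add: m_def)
      have g: "(of_nat (r*n + m) :: complex) = of_nat r * of_nat n + of_nat m" by simp
      have "exp (of_nat (r*n + m) * (- (y ^ r) + Ln y)) = exp (- (y ^ r) + Ln y) ^ (r*n + m)"
        by (rule exp_of_nat_mult)
      also have "exp (- (y ^ r) + Ln y) = exp (- v) * y" by (simp only: exp_add v_def exp_Ln[OF y0])
      also have "(exp (- v) * y) ^ (r*n + m) = exp (- v) ^ (r*n + m) * (v ^ n * y ^ m)"
        by (simp add: power_mult_distrib power_add power_mult v_def)
      also have "exp (- v) ^ (r*n + m) = exp (of_nat (r*n + m) * (- v))"
        by (rule exp_of_nat_mult[symmetric])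
      finally have "exp (of_nat (r*n + m) * (- (y ^ r) + Ln y)) = exp (- ((of_nat r * of_nat n + of_nat m) * v)) * (v ^ n * y ^ m)"
        by (simp add: g)
      thus ?thesis unfolding N g by (simp add: mult_ac)
    qed
    have S: "(\<lambda>n. Bc * (of_nat (r*n + r - a - 1)) ^ n / fact n
          * exp (of_nat (r*n + r - a - 1) * (- (y ^ r) + Ln y))) sums ((Bc * y ^ m) * (1 / (1 - of_nat r * v)))"
      unfolding tm by (rule sums_mult[OF core'])
    have yr: "norm y < real r powr (-1 / real r)" using ye by (simp add: \<epsilon>_def \<rho>r_def)
    have tpow: "(y / complex_of_real \<rho>r) ^ r = of_nat r * v"
      unfolding power_divide rho_pow v_def by simp
    have rv1: "of_nat r * v \<noteq> 1"
    proof
      assume "of_nat r * v = 1"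
      hence "norm (of_nat r * v) = 1" by simp
      moreover have "norm (of_nat r * v) < 1"
      proof -
        have "norm (of_nat r * v) = real r * norm v" by (simp add: norm_mult)
        also have "\<dots> \<le> norm v * exp (2 * real r) * real r"
          using mult_left_mono[of 1 "exp (2 * real r)" "norm v"] rp by (simp add: mult_ac)
        finally show ?thesis using c1 by simp
      qed
      ultimately show False by simp
    qed
    have X: "xit r a y = K / complex_of_real \<rho>r * (y / complex_of_real \<rho>r) ^ m / (1 - (y / complex_of_real \<rho>r) ^ r)"
      using xit_closed[OF r1 ar yr] tpow rv1 by (simp add: K_def \<rho>r_def m_def)
    have KB: "K = Bc * complex_of_real \<rho>r ^ (m + 1)"
    proof -
      have "real r powr (1/2 - real (a+1) / real r) * \<rho>r ^ (m + 1) = real r powr (-1/2 - 1/real r)"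
        using powr_exp_identity[OF r1 ar] by (simp add: \<rho>r_def m_def)
      hence "complex_of_real (real r powr (1/2 - real (a+1) / real r)) * complex_of_real \<rho>r ^ (m + 1)
          = complex_of_real (real r powr (-1/2 - 1/real r))"
        by (metis of_real_mult of_real_power)
      thus ?thesis by (simp add: K_def Bc_def mult_ac)
    qed
    have "xit r a y = Bc * y ^ m * (1 / (1 - of_nat r * v))"
    proof -
      have rho_nz: "complex_of_real \<rho>r \<noteq> 0" using \<rho>0 by simp
      have "xit r a y = K / complex_of_real \<rho>r * (y ^ m / complex_of_real \<rho>r ^ m) / (1 - of_nat r * v)"
        unfolding X tpow by (simp add: power_divide)
      also have "\<dots> = Bc * y ^ m * (1 / (1 - of_nat r * v))"
        unfolding KB using rho_nz by (simp add: field_simps power_add)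
      finally show ?thesis .
    qed
    with S show ?thesis by simp
  qed
  show ?thesis
    unfolding eventually_at
    apply (rule exI[of _ \<epsilon>])
    using e0 main by (auto simp: Bc_def dist_norm)
qed


end
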